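(* Let $p$ be an odd prime, $n$ a positive integer and $i$ an integer with $0\le i\le n/2$ and $p\nmid i$. Then $$v_p\!\left(\binom{2(n-i)}{n-i}^2\binom{n-i}{i}\right)\ge v_p(n).$$
   Context: $v_p$ denotes the $p$-adic valuation. *)

theory Defs
  imports "HOL-Computational_Algebra.Primes"
begin

end

theory Submission
  imports Defs
begin

lemma leg:
  fixes p :: nat
  assumes p: "prime p"
  shows "a \<le> N \<Longrightarrow> multiplicity p (fact a) = (\<Sum>j\<in>{1..N}. a div p^j)"
proof (induction a)
  case 0
  then show ?case by simp
next
  case (Suc a)
  have p1: "p > 1" using p prime_gt_1_nat by blast
  have m1: "multiplicity p (fact (Suc a) :: nat) = multiplicity p (Suc a) + multiplicity p (fact a :: nat)"
  proof -
    have "(fact (Suc a) :: nat) = Suc a * fact a" by (simp only: fact_Suc of_nat_id)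
    moreover have "multiplicity p (Suc a * (fact a :: nat)) = multiplicity p (Suc a) + multiplicity p (fact a :: nat)"
      by (rule prime_elem_multiplicity_mult_distrib) (use p in auto)
    ultimately show ?thesis by simp
  qed
  have split: "(\<Sum>j\<in>{1..N}. Suc a div p^j) = (\<Sum>j\<in>{1..N}. a div p^j) + (\<Sum>j\<in>{1..N}. if p^j dvd Suc a then 1 else 0)"
    by (auto simp add: sum.distrib[symmetric] div_Suc dvd_eq_mod_eq_0 intro!: sum.cong)
  have mle: "multiplicity p (Suc a) \<le> Suc a"
  proof -
    have "p ^ multiplicity p (Suc a) dvd Suc a" by (rule multiplicity_dvd)
    hence "p ^ multiplicity p (Suc a) \<le> Suc a" by (rule dvd_imp_le) simp
    moreover have "multiplicity p (Suc a) < p ^ multiplicity p (Suc a)"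
    proof -
      have "multiplicity p (Suc a) < 2 ^ multiplicity p (Suc a)" by (rule less_exp)
      also have "\<dots> \<le> p ^ multiplicity p (Suc a)" using p1 by (intro power_mono) auto
      finally show ?thesis .
    qed
    ultimately show ?thesis by linarith
  qed
  have "{j\<in>{1..N}. p^j dvd Suc a} = {1..multiplicity p (Suc a)}"
    using mle Suc.prems p1 by (auto simp: power_dvd_iff_le_multiplicity)
  hence "(\<Sum>j\<in>{1..N}. if p^j dvd Suc a then 1 else 0) = multiplicity p (Suc a)"
  proof -
    assume h: "{j\<in>{1..N}. p^j dvd Suc a} = {1..multiplicity p (Suc a)}"
    have "(\<Sum>j\<in>{1..N}. if p^j dvd Suc a then 1 else 0) = card {j\<in>{1..N}. p^j dvd Suc a}"
      by (simp add: sum.If_cases Int_def conj_commute)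
    then show ?thesis using h by simp
  qed
  then show ?case using m1 split Suc by simp
qed

lemma mult_le_self:
  fixes p x :: nat
  assumes "p > 1" "x > 0"
  shows "multiplicity p x \<le> x"
proof -
  have "p ^ multiplicity p x dvd x" by (rule multiplicity_dvd)
  hence "p ^ multiplicity p x \<le> x" using assms by (intro dvd_imp_le) auto
  moreover have "multiplicity p x < p ^ multiplicity p x"
  proof -
    have "multiplicity p x < 2 ^ multiplicity p x" by (rule less_exp)
    also have "\<dots> \<le> p ^ multiplicity p x" using assms by (intro power_mono) auto
    finally show ?thesis .
  qed
  ultimately show ?thesis by linarith
qed

lemma leg_binom:
  fixes p a b N :: nat
  assumes p: "prime p" and "b \<le> a" "a \<le> N"
  shows "int (multiplicity p (a choose b)) =
    (\<Sum>j\<in>{1..N}. int (a div p^j) - int (b div p^j) - int ((a-b) div p^j))"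
proof -
  have e: "fact a = (fact b * fact (a - b) * (a choose b) :: nat)"
    using binomial_fact_lemma[OF assms(2)] by simp
  have nz: "(a choose b) \<noteq> 0" using assms(2) by simp
  have "multiplicity p (fact a :: nat) = multiplicity p (fact b :: nat) + multiplicity p (fact (a-b) :: nat) + multiplicity p (a choose b)"
    using p nz by (simp add: e prime_elem_multiplicity_mult_distrib)
  moreover have "multiplicity p (fact a :: nat) = (\<Sum>j\<in>{1..N}. a div p^j)" using leg[OF p] assms by simp
  moreover have "multiplicity p (fact b :: nat) = (\<Sum>j\<in>{1..N}. b div p^j)" using leg[OF p, of b N] assms by simp
  moreover have "multiplicity p (fact (a-b) :: nat) = (\<Sum>j\<in>{1..N}. (a-b) div p^j)" using leg[OF p, of "a-b" N] assms by simp
  ultimately have "int (multiplicity p (a choose b)) = int (\<Sum>j\<in>{1..N}. a div p^j) - int (\<Sum>j\<in>{1..N}. b div p^j) - int (\<Sum>j\<in>{1..N}. (a-b) div p^j)"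
    by linarith
  then show ?thesis by (simp add: sum_subtractf of_nat_sum)
qed

lemma term_nonneg:
  fixes q m i :: nat
  assumes "i \<le> m"
  shows "0 \<le> 2*(int (2*m div q) - 2*int (m div q)) + (int (m div q) - int (i div q) - int ((m-i) div q))"
proof -
  have "2 * (m div q) \<le> 2*m div q"
    by (metis div_mult_self_is_m mult_2 add_mult_distrib div_add1_eq le_add1 div_le_mono le_refl)
  moreover have "i div q + (m-i) div q \<le> m div q"
    using assms by (metis le_add_diff_inverse div_add1_eq le_add1)
  ultimately have "int (2 * (m div q)) \<le> int (2*m div q)" "int (i div q + (m-i) div q) \<le> int (m div q)"
    by (simp_all only: of_nat_le_iff)
  then show ?thesis by simp
qed

lemma term_pos:
  fixes q m i :: nat
  assumes "i \<le> m" "q > 0" "q dvd m + i" "\<not> q dvd i"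
  shows "1 \<le> 2*(int (2*m div q) - 2*int (m div q)) + (int (m div q) - int (i div q) - int ((m-i) div q))"
proof -
  define r where "r = i mod q"
  have r0: "r > 0" "r < q" using assms unfolding r_def by (auto simp: dvd_eq_mod_eq_0)
  have mm: "m mod q = q - r"
  proof -
    have s: "(m mod q + r) mod q = 0" using assms(3) mod_add_eq[of m q i] unfolding r_def
      by (simp add: dvd_eq_mod_eq_0)
    have lt: "m mod q + r < 2*q" using r0 mod_less_divisor[of q m] assms(2) by linarith
    obtain c where c: "m mod q + r = q*c" using s by (auto simp: dvd_eq_mod_eq_0[symmetric] elim: dvdE)
    have "c < 2" using lt c assms(2) by (metis mult_less_cancel1 mult.commute)
    moreover have "c > 0" using c r0 by (auto intro: Nat.gr0I)
    ultimately have "c = 1" by linarith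
    then show ?thesis using c by simp
  qed
  have base: "2 * (m div q) \<le> 2*m div q" "i div q + (m-i) div q \<le> m div q"
    by (metis div_mult2_eq div_times_less_eq_dividend mult.commute
    nonzero_mult_div_cancel_left numeral_le_iff semiring_norm(69)
    zero_le) (metis assms(1) div_add1_eq le_add_diff_inverse le_iff_add)
  show ?thesis
  proof (cases "2 * r \<le> q")
    case True
    have e1: "m = q*(m div q) + (q - r)" using div_mult_mod_eq[of m q] mm by (metis mult.commute)
    have e2: "q*(2*(m div q)+1) = 2*(q*(m div q)) + q" by (simp add: algebra_simps)
    have "2*m = (q - 2*r) + (2*(m div q)+1)*q" using e1 e2 True r0 by (simp add: mult.commute)
    moreover have "(q - 2*r) div q = 0" using r0 by simp
    ultimately have "2*m div q = 2 * (m div q) + 1" using assms(2) div_mult_self1[of q "q - 2*r" "2*(m div q)+1"]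
      by simp
    then show ?thesis using base by simp
  next
    case False
    define d where "d = m - i"
    have md: "m = d + i" using assms(1) unfolding d_def by simp
    have dv: "m div q = d div q + i div q + (d mod q + r) div q"
      using div_add1_eq[of d i q] md unfolding r_def by simp
    have s: "(d mod q + r) mod q = q - r" using mod_add_eq[of d q i] md mm unfolding r_def by simp
    have ge: "d mod q + r \<ge> q"
    proof (rule ccontr)
      assume "\<not> q \<le> d mod q + r"
      then have "d mod q + r = q - r" using s by simp
      then show False using False by linarith
    qed
    have lt: "d mod q + r < 2*q" using r0 mod_less_divisor[of q d] assms(2) by linarith
    have "(d mod q + r) div q = 1"
    proof -
      have "(d mod q + r) div q = ((d mod q + r - q) + 1*q) div q" using ge by simp
      also have "\<dots> = 1 + (d mod q + r - q) div q" using assms(2) by (intro div_mult_self1) simp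
      also have "(d mod q + r - q) div q = 0" using lt by simp
      finally show ?thesis by simp
    qed
    then have "m div q = (m-i) div q + i div q + 1" using dv unfolding d_def by simp
    then show ?thesis using base by simp
  qed
qed


theorem proposition16:
  fixes p n i :: nat
  assumes "prime p" and "odd p" and "n > 0" and "2 * i \<le> n" and "\<not> p dvd i"
  shows "multiplicity p ((2 * (n - i) choose (n - i))^2 * ((n - i) choose i)) \<ge> multiplicity p n"
proof -
  define m where "m = n - i"
  have im: "i \<le> m" and nm: "n = m + i" using assms(4) unfolding m_def by auto
  have p1: "p > 1" using assms(1) prime_gt_1_nat by blast
  define k where "k = multiplicity p n"
  have kN: "k \<le> 2*m" using mult_le_self[OF p1 assms(3)] nm im unfolding k_def by linarith
  define T where "T j = 2*(int (2*m div p^j) - 2*int (m div p^j)) + (int (m div p^j) - int (i div p^j) - int ((m-i) div p^j))" for j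
  have c1: "(2*m choose m) \<noteq> 0" and c2: "(m choose i) \<noteq> 0" using im by auto
  have "multiplicity p ((2*m choose m)^2 * (m choose i)) = 2 * multiplicity p (2*m choose m) + multiplicity p (m choose i)"
    using assms(1) c1 c2 by (simp add: prime_elem_multiplicity_mult_distrib prime_elem_multiplicity_power_distrib)
  hence "int (multiplicity p ((2*m choose m)^2 * (m choose i))) = 2 * int (multiplicity p (2*m choose m)) + int (multiplicity p (m choose i))"
    by simp
  also have "\<dots> = 2 * (\<Sum>j\<in>{1..2*m}. int (2*m div p^j) - int (m div p^j) - int ((2*m-m) div p^j))
      + (\<Sum>j\<in>{1..2*m}. int (m div p^j) - int (i div p^j) - int ((m-i) div p^j))"
    using leg_binom[OF assms(1), of m "2*m" "2*m"] leg_binom[OF assms(1), of i m "2*m"] im by simp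
  also have "\<dots> = (\<Sum>j\<in>{1..2*m}. 2 * (int (2*m div p^j) - int (m div p^j) - int ((2*m-m) div p^j))
      + (int (m div p^j) - int (i div p^j) - int ((m-i) div p^j)))"
    by (simp only: sum_distrib_left sum.distrib)
  also have "\<dots> = (\<Sum>j\<in>{1..2*m}. T j)"
  proof (rule sum.cong)
    fix j
    have "2*m - m = m" by simp
    then show "2 * (int (2*m div p^j) - int (m div p^j) - int ((2*m-m) div p^j))
      + (int (m div p^j) - int (i div p^j) - int ((m-i) div p^j)) = T j"
    proof -
      have h: "\<And>a b c. 2*(a - b - b) + c = 2*(a - 2*b) + (c::int)" by simp
      show ?thesis unfolding T_def \<open>2*m - m = m\<close> by (rule h)
    qed
  qed simp
  finally have eq: "int (multiplicity p ((2*m choose m)^2 * (m choose i))) = (\<Sum>j\<in>{1..2*m}. T j)" .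
  have s1: "(\<Sum>j\<in>{1..2*m}. T j) \<ge> (\<Sum>j\<in>{1..k}. T j)"
    by (rule sum_mono2) (use kN im term_nonneg in \<open>auto simp: T_def\<close>)
  have s2: "(\<Sum>j\<in>{1..k}. T j) \<ge> (\<Sum>j\<in>{1..k}. 1)"
  proof (rule sum_mono)
    fix j assume j: "j \<in> {1..k}"
    have "p^j dvd n" using j unfolding k_def by (auto intro: multiplicity_dvd')
    moreover have "\<not> p^j dvd i"
    proof
      assume "p^j dvd i"
      moreover have "p dvd p^j" using j by (auto intro: dvd_power)
      ultimately show False using assms(5) by (meson dvd_trans)
    qed
    ultimately show "1 \<le> T j" unfolding T_def using term_pos[of i m "p^j"] im nm p1 by auto
  qed
  have "int k \<le> int (multiplicity p ((2*m choose m)^2 * (m choose i)))" using eq s1 s2 by simp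
  then show ?thesis unfolding k_def m_def by simp
qed

end
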